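(* For every real $a>0$: (i) for every complex $s$ with $\Re(s)>2$, \[\sum_{k=1}^\infty \zeta(s,ka)=a^{-s}\sum_{n=0}^\infty \zeta\Big(s,\frac{n}{a}+1\Big);\] (ii) for every complex $s$ with $\Re(s)>1$, \[\sum_{k=1}^\infty (-1)^{k-1} \zeta(s,ka)=(2a)^{-s}\sum_{n=0}^\infty\Big\{\zeta\Big(s,\frac{n}{2a}+\frac{1}{2}\Big)-\zeta\Big(s,\frac{n}{2a}+1\Big)\Big\}.\]
   Context: $\zeta(s,\alpha)=\sum_{n=0}^\infty (n+\alpha)^{-s}$ denotes the Hurwitz zeta function ($\Re(s)>1$, $\alpha>0$). *)

theory Defs
  imports "HOL-Analysis.Analysis"
begin

text \<open>Hurwitz zeta function, defined by its Dirichlet series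
  zeta(s,alpha) = sum_{n>=0} (n+alpha)^(-s) (meaningful for Re s > 1, alpha > 0).\<close>
definition hurwitz_zeta :: "complex \<Rightarrow> real \<Rightarrow> complex" where
  "hurwitz_zeta s \<alpha> = (\<Sum>n. (complex_of_real (real n + \<alpha>)) powr (- s))"

end

theory Submission
  imports Defs
begin


lemma norm_P: "x > 0 \<Longrightarrow> norm (complex_of_real x powr (- s)) = x powr (- Re s)"
  by (subst norm_powr_real_powr) auto

lemma P_mult: "x \<ge> 0 \<Longrightarrow> y \<ge> 0 \<Longrightarrow>
   complex_of_real (x * y) powr z = complex_of_real x powr z * complex_of_real y powr z"
  by (subst of_real_mult, rule powr_times_real) auto

lemma summable_Suc_powr: "p > 1 \<Longrightarrow> summable (\<lambda>n. (real n + 1) powr (-p))"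
proof -
  assume p: "p > 1"
  have "summable (\<lambda>n. real n powr (-p))" using summable_real_powr_iff[of "-p"] p by simp
  then have "summable (\<lambda>n. real (Suc n) powr (-p))" by (subst summable_Suc_iff)
  then show ?thesis by (simp add: add.commute)
qed

lemma summable_shift_powr:
  assumes p: "p > 1" and c: "c > 0"
  shows "summable (\<lambda>n. (real n + c) powr (-p))"
proof (rule summable_comparison_test')
  define m where "m = min 1 c"
  have m: "m > 0" using c by (simp add: m_def)
  show "summable (\<lambda>n. m powr (-p) * (real n + 1) powr (-p))"
    by (rule summable_mult, rule summable_Suc_powr[OF p])
  fix n :: nat assume "n \<ge> 0"
  have le: "m * (real n + 1) \<le> real n + c"
    using mult_right_mono[of c 1 "real n"] c unfolding m_def by (cases "c \<le> 1") (auto simp: algebra_simps)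
  have "(real n + c) powr (-p) \<le> (m * (real n + 1)) powr (-p)"
    by (rule powr_mono2') (use p m le in auto)
  also have "\<dots> = m powr (-p) * (real n + 1) powr (-p)"
    using m by (simp add: powr_mult)
  finally show "norm ((real n + c) powr (-p)) \<le> m powr (-p) * (real n + 1) powr (-p)" by simp
qed

lemma hz_norm_summable:
  assumes s: "Re s > 1" and c: "c > 0"
  shows "summable (\<lambda>n. norm (complex_of_real (real n + c) powr (- s)))"
proof -
  have "(\<lambda>n. norm (complex_of_real (real n + c) powr (- s))) = (\<lambda>n. (real n + c) powr (- Re s))"
    using c by (intro ext norm_P) (simp add: add_nonneg_pos)
  then show ?thesis using summable_shift_powr[OF s c] by simp
qed

lemma hz_sums:
  assumes s: "Re s > 1" and c: "c > 0"
  shows "(\<lambda>n. complex_of_real (real n + c) powr (- s)) sums hurwitz_zeta s c"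
  unfolding hurwitz_zeta_def
  using summable_norm_cancel[OF hz_norm_summable[OF s c]] by (simp add: summable_sums)

lemma hz_has_sum:
  assumes s: "Re s > 1" and c: "c > 0"
  shows "((\<lambda>n. complex_of_real (real n + c) powr (- s)) has_sum hurwitz_zeta s c) UNIV"
  by (rule norm_summable_imp_has_sum[OF hz_norm_summable[OF s c] hz_sums[OF s c]])


lemma prod_summable_on:
  fixes u v :: "nat \<Rightarrow> real"
  assumes "summable u" "summable v" "\<And>n. u n \<ge> 0" "\<And>n. v n \<ge> 0"
  shows "(\<lambda>(m,k). u m * v k) summable_on UNIV"
proof -
  have su: "u summable_on UNIV" using assms by (intro norm_summable_imp_summable_on) simp
  have sv: "(v has_sum infsum v UNIV) UNIV" using assms
    by (intro has_sum_infsum norm_summable_imp_summable_on) simp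
  have "(\<lambda>(m,k). u m * v k) summable_on Sigma UNIV (\<lambda>_. UNIV)"
  proof (rule summable_on_SigmaI)
    show "((\<lambda>y. (\<lambda>(m,k). u m * v k) (x, y)) has_sum u x * infsum v UNIV) UNIV" for x
      using has_sum_cmult_right[OF sv, of "u x"] by simp
    show "(\<lambda>x. u x * infsum v UNIV) summable_on UNIV"
      by (rule summable_on_cmult_left[OF su])
  qed (use assms in auto)
  then show ?thesis by simp
qed

lemma double_summable:
  assumes p: "p > 2" and al: "\<alpha> > 0" and be: "\<beta> > 0" and ga: "\<gamma> > 0"
  shows "(\<lambda>(m::nat,k::nat). (\<alpha> * real m + \<beta> * real k + \<gamma>) powr (-p)) summable_on UNIV"
proof -
  define \<mu> where "\<mu> = min \<alpha> (min \<beta> \<gamma>)"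
  have mu: "\<mu> > 0" using al be ga by (simp add: \<mu>_def)
  define u where "u n = (real n + 1) powr (-(p/2))" for n :: nat
  have su: "summable u" unfolding u_def using p by (intro summable_Suc_powr) simp
  have F: "(\<lambda>(m,k). u m * u k) summable_on UNIV"
    by (rule prod_summable_on[OF su su]) (simp_all add: u_def)
  have F2: "(\<lambda>(m,k). \<mu> powr (-p) * (u m * u k)) summable_on UNIV"
    using summable_on_cmult_right[OF F, of "\<mu> powr (-p)"] by (simp add: case_prod_unfold)
  show ?thesis
  proof (rule summable_on_comparison_test[OF F2])
    fix x :: "nat \<times> nat"
    obtain m k where x: "x = (m,k)" by (cases x)
    define A where "A = \<alpha> * real m + \<beta> * real k + \<gamma>"
    have A1: "\<mu> * (real m + 1) \<le> A"
    proof -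
      have "\<mu> * real m \<le> \<alpha> * real m" by (rule mult_right_mono) (auto simp: \<mu>_def)
      moreover have "\<mu> \<le> \<gamma>" by (simp add: \<mu>_def)
      moreover have "0 \<le> \<beta> * real k" using be by simp
      ultimately show ?thesis by (simp add: A_def algebra_simps)
    qed
    have A2: "\<mu> * (real k + 1) \<le> A"
    proof -
      have "\<mu> * real k \<le> \<beta> * real k" by (rule mult_right_mono) (auto simp: \<mu>_def)
      moreover have "\<mu> \<le> \<gamma>" by (simp add: \<mu>_def)
      moreover have "0 \<le> \<alpha> * real m" using al by simp
      ultimately show ?thesis by (simp add: A_def algebra_simps)
    qed
    have Apos: "A > 0" using A1 mu by (smt (verit) mult_pos_pos of_nat_0_le_iff)
    have "A powr (-p) = A powr (-(p/2)) * A powr (-(p/2))"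
      by (simp add: powr_add[symmetric])
    also have "\<dots> \<le> (\<mu> * (real m + 1)) powr (-(p/2)) * (\<mu> * (real k + 1)) powr (-(p/2))"
      by (intro mult_mono powr_mono2') (use A1 A2 mu p in auto)
    also have "\<dots> = \<mu> powr (-p) * (u m * u k)"
    proof -
      have "\<mu> powr (-p) = \<mu> powr (-(p/2)) * \<mu> powr (-(p/2))" by (simp add: powr_add[symmetric])
      moreover have "(\<mu> * (real m + 1)) powr (-(p/2)) = \<mu> powr (-(p/2)) * u m"
        using mu by (simp add: u_def powr_mult)
      moreover have "(\<mu> * (real k + 1)) powr (-(p/2)) = \<mu> powr (-(p/2)) * u k"
        using mu by (simp add: u_def powr_mult)
      ultimately show ?thesis by (simp add: algebra_simps)
    qed
    finally show "(\<lambda>(m,k). (\<alpha> * real m + \<beta> * real k + \<gamma>) powr (-p)) x \<le> (\<lambda>(m,k). \<mu> powr (-p) * (u m * u k)) x"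
      by (simp add: x A_def)
  qed auto
qed


lemma part1:
  fixes a :: real and s :: complex
  assumes a: "a > 0" and s: "Re s > 2"
  shows "summable (\<lambda>n::nat. hurwitz_zeta s (real n / a + 1)) \<and>
            (\<lambda>k::nat. hurwitz_zeta s (real (Suc k) * a)) sums
              (complex_of_real a powr (- s) * (\<Sum>n. hurwitz_zeta s (real n / a + 1)))"
proof -
  have s1: "Re s > 1" using s by simp
  define F where "F = (\<lambda>(k::nat,m::nat). complex_of_real (real m + real (Suc k) * a) powr (- s))"
  have nF: "norm (F (k,m)) = (a * real k + 1 * real m + a) powr (- Re s)" for k m
  proof -
    have "real m + real (Suc k) * a = a * real k + 1 * real m + a" by (simp add: algebra_simps)
    moreover have "a * real k + 1 * real m + a > 0" using a by (simp add: add_nonneg_pos)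
    ultimately show ?thesis unfolding F_def prod.case by (metis norm_P)
  qed
  have "(\<lambda>(k::nat,m::nat). (a * real k + 1 * real m + a) powr (- Re s)) summable_on UNIV"
    by (rule double_summable) (use a s in auto)
  then have "(\<lambda>x. norm (F x)) summable_on UNIV"
    by (rule summable_on_cong[THEN iffD1, rotated]) (auto simp: nF)
  then have Fs: "F summable_on UNIV" by (rule abs_summable_summable)
  define S where "S = infsum F UNIV"
  have FS: "(F has_sum S) (Sigma UNIV (\<lambda>_. UNIV))" using Fs unfolding S_def by (simp add: has_sum_infsum)
  have "((\<lambda>k. hurwitz_zeta s (real (Suc k) * a)) has_sum S) UNIV"
  proof (rule has_sum_SigmaD[OF FS])
    fix k :: nat
    show "((\<lambda>m. F (k, m)) has_sum hurwitz_zeta s (real (Suc k) * a)) UNIV"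
      unfolding F_def using hz_has_sum[OF s1, of "real (Suc k) * a"] a by simp
  qed
  then have sums1: "(\<lambda>k. hurwitz_zeta s (real (Suc k) * a)) sums S" by (rule has_sum_imp_sums)
  define c where "c = complex_of_real a powr (- s)"
  have c0: "c \<noteq> 0" using a by (simp add: c_def)
  have FS2: "((\<lambda>(m,k). F (k,m)) has_sum S) (Sigma UNIV (\<lambda>_. UNIV))"
    using FS has_sum_swap[where f=F and S=S and A=UNIV and B=UNIV] by simp
  have "((\<lambda>m. c * hurwitz_zeta s (real m / a + 1)) has_sum S) UNIV"
  proof (rule has_sum_SigmaD[OF FS2])
    fix m :: nat
    have eq: "F (k,m) = c * complex_of_real (real k + (real m / a + 1)) powr (- s)" for k
    proof -
      have "real m + real (Suc k) * a = a * (real k + (real m / a + 1))"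
        using a by (simp add: field_simps)
      then show ?thesis unfolding F_def c_def using a
        by (simp only: case_prod_conv) (subst P_mult[symmetric]; auto simp: add_nonneg_pos)
    qed
    show "((\<lambda>k. (\<lambda>(m,k). F (k,m)) (m, k)) has_sum c * hurwitz_zeta s (real m / a + 1)) UNIV"
      using has_sum_cmult_right[OF hz_has_sum[OF s1, of "real m / a + 1"], of c] a
      by (simp add: eq add_nonneg_pos)
  qed
  then have "((\<lambda>m. inverse c * (c * hurwitz_zeta s (real m / a + 1))) has_sum inverse c * S) UNIV"
    by (rule has_sum_cmult_right)
  then have "(\<lambda>m. hurwitz_zeta s (real m / a + 1)) sums (inverse c * S)"
    using c0 by (intro has_sum_imp_sums) (simp add: field_simps)
  then show ?thesis using sums1 c0 unfolding c_def[symmetric]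
    by (auto simp: sums_iff field_simps)
qed


lemma hz_bound:
  assumes s: "Re s > 1" and a: "a > 0" and x: "x \<ge> a"
  shows "norm (hurwitz_zeta s x) \<le> x powr (-((Re s - 1)/2)) * (\<Sum>n. (real n + a) powr (-(1 + (Re s - 1)/2)))"
proof -
  define d where "d = (Re s - 1)/2"
  have d: "d > 0" using s by (simp add: d_def)
  have x0: "x > 0" using a x by simp
  have sn: "summable (\<lambda>n. norm (complex_of_real (real n + x) powr (- s)))" by (rule hz_norm_summable[OF s x0])
  have sb: "summable (\<lambda>n. (real n + a) powr (-(1 + d)))" by (rule summable_shift_powr) (use d a in auto)
  have "norm (hurwitz_zeta s x) \<le> (\<Sum>n. norm (complex_of_real (real n + x) powr (- s)))"
    unfolding hurwitz_zeta_def by (rule summable_norm[OF sn])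
  also have "\<dots> \<le> (\<Sum>n. x powr (-d) * (real n + a) powr (-(1 + d)))"
  proof (rule suminf_le)
    fix n :: nat
    have p: "real n + x > 0" using x0 by (simp add: add_nonneg_pos)
    have "norm (complex_of_real (real n + x) powr (- s)) = (real n + x) powr (- Re s)"
      by (rule norm_P[OF p])
    also have "\<dots> = (real n + x) powr (-(1 + d)) * (real n + x) powr (-d)"
      by (simp add: powr_add[symmetric] d_def)
    also have "\<dots> \<le> (real n + a) powr (-(1 + d)) * x powr (-d)"
      by (intro mult_mono powr_mono2') (use d a x in auto)
    finally show "norm (complex_of_real (real n + x) powr (- s)) \<le> x powr (-d) * (real n + a) powr (-(1 + d))"
      by (simp add: mult.commute)
  qed (use sn sb in \<open>auto intro: summable_mult\<close>)
  also have "\<dots> = x powr (-d) * (\<Sum>n. (real n + a) powr (-(1 + d)))"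
    by (rule suminf_mult[OF sb])
  finally show ?thesis unfolding d_def .
qed

lemma hz_tendsto0:
  assumes s: "Re s > 1" and a: "a > 0"
  shows "(\<lambda>k. hurwitz_zeta s (real (Suc k) * a)) \<longlonglongrightarrow> 0"
proof -
  define d where "d = (Re s - 1)/2"
  define K where "K = (\<Sum>n. (real n + a) powr (-(1 + d)))"
  have ev: "\<forall>\<^sub>F k in sequentially. norm (hurwitz_zeta s (real (Suc k) * a)) \<le> (real (Suc k) * a) powr (-d) * K"
  proof (rule always_eventually, rule allI)
    fix k :: nat
    have "a \<le> real (Suc k) * a" using a by simp
    from hz_bound[OF s a this] show "norm (hurwitz_zeta s (real (Suc k) * a)) \<le> (real (Suc k) * a) powr (-d) * K"
      unfolding d_def K_def .
  qed
  have d: "d > 0" using s by (simp add: d_def)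
  have "filterlim (\<lambda>k. real (Suc k)) at_top sequentially"
    using filterlim_compose[OF filterlim_real_sequentially filterlim_Suc] by (simp add: o_def)
  then have "filterlim (\<lambda>k. a * real (Suc k)) at_top sequentially"
    by (rule filterlim_tendsto_pos_mult_at_top[OF tendsto_const a])
  then have "filterlim (\<lambda>k. real (Suc k) * a) at_top sequentially" by (simp add: mult.commute)
  have "(\<lambda>k. (real (Suc k) * a) powr (-d)) \<longlonglongrightarrow> 0"
    by (rule tendsto_neg_powr[OF _ \<open>filterlim (\<lambda>k. real (Suc k) * a) at_top sequentially\<close>]) (use d in simp)
  then have "(\<lambda>k. (real (Suc k) * a) powr (-d) * K) \<longlonglongrightarrow> 0"
    by (rule tendsto_mult_left_zero)
  from Lim_null_comparison[OF ev this] show ?thesis .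
qed


lemma diff_bound:
  assumes x: "x > 0" and h: "h > 0" and s: "Re s > 1"
  shows "norm (complex_of_real x powr (- s) - complex_of_real (x + h) powr (- s))
          \<le> norm s * x powr (- Re s - 1) * h"
proof -
  define S where "S = closed_segment (complex_of_real x) (complex_of_real (x + h))"
  have memS: "\<exists>t. z = complex_of_real t \<and> x \<le> t" if "z \<in> S" for z
  proof -
    from that obtain u where u: "0 \<le> u" "u \<le> 1" "z = (1 - u) *\<^sub>R complex_of_real x + u *\<^sub>R complex_of_real (x + h)"
      unfolding S_def closed_segment_def by auto
    have "z = complex_of_real (x + u * h)" using u(3) by (simp add: scaleR_conv_of_real algebra_simps)
    moreover have "x \<le> x + u * h" using u h by simp
    ultimately show ?thesis by blast
  qed
  have "norm ((\<lambda>z. z powr (- s)) (complex_of_real x) - (\<lambda>z. z powr (- s)) (complex_of_real (x + h)))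
        \<le> (norm s * x powr (- Re s - 1)) * norm (complex_of_real x - complex_of_real (x + h))"
  proof (rule field_differentiable_bound[where f' = "\<lambda>z. - s * z powr (- s - 1)"])
    show "convex S" unfolding S_def by simp
    fix z assume "z \<in> S"
    then obtain t where t: "z = complex_of_real t" "x \<le> t" using memS by blast
    have t0: "t > 0" using t x by simp
    have "z \<notin> \<real>\<^sub>\<le>\<^sub>0" using t t0 by (auto simp: complex_nonpos_Reals_iff)
    from has_field_derivative_powr[OF this, of "- s"]
    show "((\<lambda>z. z powr (- s)) has_field_derivative - s * z powr (- s - 1)) (at z within S)"
      by (auto intro: has_field_derivative_at_within)
    have "norm (- s * z powr (- s - 1)) = norm s * t powr (- Re s - 1)"
      using t t0 by (simp add: norm_mult norm_P[of t "s + 1", simplified])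
    also have "\<dots> \<le> norm s * x powr (- Re s - 1)"
      by (intro mult_left_mono powr_mono2') (use t x s in auto)
    finally show "norm (- s * z powr (- s - 1)) \<le> norm s * x powr (- Re s - 1)" .
  qed (auto simp: S_def)
  then show ?thesis using h by (simp add: norm_minus_commute)
qed


lemma limseq_even_odd':
  assumes "(\<lambda>n. f (2 * n)) \<longlonglongrightarrow> (l :: 'a :: topological_space)"
      and "(\<lambda>n. f (2 * n + 1)) \<longlonglongrightarrow> l"
  shows "f \<longlonglongrightarrow> l"
  unfolding tendsto_def
proof (intro allI impI)
  fix S assume S: "open S" "l \<in> S"
  from assms S obtain n_e n_o where E: "\<And>n. n \<ge> n_e \<Longrightarrow> f (2 * n) \<in> S"
    and O: "\<And>n. n \<ge> n_o \<Longrightarrow> f (2 * n + 1) \<in> S"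
    unfolding tendsto_def eventually_sequentially by meson
  show "eventually (\<lambda>n. f n \<in> S) sequentially"
    unfolding eventually_sequentially
  proof (intro exI allI impI)
    fix n assume "max (2 * n_e) (2 * n_o + 1) \<le> n" then show "f n \<in> S"
      by (cases "even n") (auto elim!: evenE oddE intro: E O)
  qed
qed

lemma has_sum_diff':
  fixes f g :: "'a \<Rightarrow> complex"
  assumes "(f has_sum a) A" "(g has_sum b) A"
  shows "((\<lambda>x. f x - g x) has_sum (a - b)) A"
proof -
  have "((\<lambda>x. - g x) has_sum (- b)) A" using assms(2) by (simp add: has_sum_uminus)
  from has_sum_add[OF assms(1) this] show ?thesis by simp
qed

lemma part2:
  fixes a :: real and s :: complex
  assumes a: "a > 0" and s: "Re s > 1"
  shows "summable (\<lambda>n::nat. hurwitz_zeta s (real n / (2 * a) + 1 / 2)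
                                 - hurwitz_zeta s (real n / (2 * a) + 1)) \<and>
            (\<lambda>k::nat. (-1) ^ k * hurwitz_zeta s (real (Suc k) * a)) sums
              (complex_of_real (2 * a) powr (- s) *
                 (\<Sum>n. hurwitz_zeta s (real n / (2 * a) + 1 / 2)
                        - hurwitz_zeta s (real n / (2 * a) + 1)))"
proof -
  define Dm where "Dm = (\<lambda>(j::nat,n::nat). complex_of_real (real n + real (Suc (2*j)) * a) powr (- s)
       - complex_of_real (real n + real (Suc (2*j+1)) * a) powr (- s))"
  have nD: "norm (Dm (j,n)) \<le> (norm s * a) * (2 * a * real j + 1 * real n + a) powr (- (Re s + 1))" for j n
  proof -
    define x where "x = real n + real (Suc (2*j)) * a"
    have x0: "x > 0" using a by (simp add: x_def add_nonneg_pos)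
    have e2: "real n + real (Suc (2*j+1)) * a = x + a" by (simp add: x_def algebra_simps)
    have e3: "x = 2 * a * real j + 1 * real n + a" by (simp add: x_def algebra_simps)
    have "norm (Dm (j,n)) = norm (complex_of_real x powr (- s) - complex_of_real (x + a) powr (- s))"
      unfolding Dm_def prod.case x_def[symmetric] e2 ..
    also have "\<dots> \<le> norm s * x powr (- Re s - 1) * a" by (rule diff_bound[OF x0 a s])
    also have "- Re s - 1 = - (Re s + 1)" by simp
    finally show ?thesis unfolding e3 by (simp add: mult_ac)
  qed
  have "(\<lambda>(j::nat,n::nat). (2 * a * real j + 1 * real n + a) powr (- (Re s + 1))) summable_on UNIV"
    by (rule double_summable) (use a s in auto)
  then have "(\<lambda>x. (norm s * a) * (\<lambda>(j::nat,n::nat). (2 * a * real j + 1 * real n + a) powr (- (Re s + 1))) x) summable_on UNIV"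
    by (rule summable_on_cmult_right)
  then have "(\<lambda>x. norm (Dm x)) summable_on UNIV"
  proof (rule summable_on_comparison_test)
    fix x :: "nat \<times> nat"
    obtain j n where x: "x = (j,n)" by (cases x)
    show "norm (Dm x) \<le> (norm s * a) * (\<lambda>(j::nat,n::nat). (2 * a * real j + 1 * real n + a) powr (- (Re s + 1))) x"
      unfolding x prod.case by (rule nD)
  qed auto
  then have Ds: "Dm summable_on UNIV" by (rule abs_summable_summable)
  define T where "T = infsum Dm UNIV"
  have DT: "(Dm has_sum T) (Sigma UNIV (\<lambda>_. UNIV))" using Ds unfolding T_def by (simp add: has_sum_infsum)
  define e where "e j = hurwitz_zeta s (real (Suc (2*j)) * a) - hurwitz_zeta s (real (Suc (2*j+1)) * a)" for j
  have "(e has_sum T) UNIV"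
  proof (rule has_sum_SigmaD[OF DT])
    fix j :: nat
    have p1: "real (Suc (2*j)) * a > 0" "real (Suc (2*j+1)) * a > 0" using a by auto
    show "((\<lambda>n. Dm (j, n)) has_sum e j) UNIV"
      unfolding Dm_def e_def prod.case
      by (rule has_sum_diff'[OF hz_has_sum[OF s p1(1)] hz_has_sum[OF s p1(2)]])
  qed
  then have esums: "e sums T" by (rule has_sum_imp_sums)
  define c where "c = complex_of_real (2 * a) powr (- s)"
  have c0: "c \<noteq> 0" using a by (simp add: c_def)
  define Z where "Z n = hurwitz_zeta s (real n / (2 * a) + 1 / 2) - hurwitz_zeta s (real n / (2 * a) + 1)" for n
  have DT2: "((\<lambda>(n,j). Dm (j,n)) has_sum T) (Sigma UNIV (\<lambda>_. UNIV))"
    using DT has_sum_swap[where f=Dm and S=T and A=UNIV and B=UNIV] by simp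
  have "((\<lambda>n. c * Z n) has_sum T) UNIV"
  proof (rule has_sum_SigmaD[OF DT2])
    fix n :: nat
    have q1: "real n / (2 * a) + 1 / 2 > 0" "real n / (2 * a) + 1 > 0" using a by (auto simp: add_nonneg_pos)
    have eq1: "complex_of_real (real n + real (Suc (2*j)) * a) powr (- s) = c * complex_of_real (real j + (real n / (2 * a) + 1 / 2)) powr (- s)" for j
    proof -
      have "real n + real (Suc (2*j)) * a = (2 * a) * (real j + (real n / (2 * a) + 1 / 2))"
        using a by (simp add: field_simps)
      then show ?thesis unfolding c_def using a
        by (subst P_mult[symmetric]; auto simp: add_nonneg_pos)
    qed
    have eq2: "complex_of_real (real n + real (Suc (2*j+1)) * a) powr (- s) = c * complex_of_real (real j + (real n / (2 * a) + 1)) powr (- s)" for j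
    proof -
      have "real n + real (Suc (2*j+1)) * a = (2 * a) * (real j + (real n / (2 * a) + 1))"
        using a by (simp add: field_simps)
      then show ?thesis unfolding c_def using a
        by (subst P_mult[symmetric]; auto simp: add_nonneg_pos)
    qed
    have "((\<lambda>j. c * complex_of_real (real j + (real n / (2 * a) + 1 / 2)) powr (- s)
              - c * complex_of_real (real j + (real n / (2 * a) + 1)) powr (- s)) has_sum
           (c * hurwitz_zeta s (real n / (2 * a) + 1 / 2) - c * hurwitz_zeta s (real n / (2 * a) + 1))) UNIV"
      by (intro has_sum_diff' has_sum_cmult_right hz_has_sum[OF s] q1)
    then show "((\<lambda>j. (\<lambda>(n,j). Dm (j,n)) (n, j)) has_sum c * Z n) UNIV"
      unfolding Dm_def prod.case eq1 eq2 Z_def by (simp add: algebra_simps)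
  qed
  then have "((\<lambda>n. inverse c * (c * Z n)) has_sum inverse c * T) UNIV"
    by (rule has_sum_cmult_right)
  then have Zs: "Z sums (inverse c * T)"
    using c0 by (intro has_sum_imp_sums) (simp add: field_simps)
  define g where "g k = (-1::complex) ^ k * hurwitz_zeta s (real (Suc k) * a)" for k
  have gsum: "sum g {..<2*J} = sum e {..<J}" for J
    by (induction J) (simp_all add: g_def e_def)
  have g0: "g \<longlonglongrightarrow> 0"
  proof -
    have "(\<lambda>k. norm (g k)) = (\<lambda>k. norm (hurwitz_zeta s (real (Suc k) * a)))"
      by (simp add: g_def norm_mult norm_power)
    moreover have "(\<lambda>k. norm (hurwitz_zeta s (real (Suc k) * a))) \<longlonglongrightarrow> 0"
      using hz_tendsto0[OF s a] by (simp add: tendsto_norm_zero_iff)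
    ultimately have "(\<lambda>k. norm (g k)) \<longlonglongrightarrow> 0" by simp
    then show ?thesis by (rule tendsto_norm_zero_cancel)
  qed
  have gT: "g sums T"
    unfolding sums_def
  proof (rule limseq_even_odd')
    have "(\<lambda>J. sum e {..<J}) \<longlonglongrightarrow> T" using esums by (simp add: sums_def)
    then show ev: "(\<lambda>J. sum g {..<2*J}) \<longlonglongrightarrow> T" by (simp add: gsum)
    have "(\<lambda>J. g (2*J)) \<longlonglongrightarrow> 0"
      by (rule LIMSEQ_subseq_LIMSEQ[OF g0, unfolded o_def]) (simp add: strict_mono_def)
    from tendsto_add[OF ev this] show "(\<lambda>J. sum g {..<2*J+1}) \<longlonglongrightarrow> T" by simp
  qed
  show ?thesis
    using gT Zs c0 unfolding g_def[abs_def] Z_def[abs_def] c_def[symmetric]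
    by (auto simp: sums_iff field_simps)
qed

theorem mainTheorem14:
  fixes a :: real
  assumes "a > 0"
  shows "(\<forall>s::complex. Re s > 2 \<longrightarrow>
            summable (\<lambda>n::nat. hurwitz_zeta s (real n / a + 1)) \<and>
            (\<lambda>k::nat. hurwitz_zeta s (real (Suc k) * a)) sums
              (complex_of_real a powr (- s) * (\<Sum>n. hurwitz_zeta s (real n / a + 1))))
       \<and> (\<forall>s::complex. Re s > 1 \<longrightarrow>
            summable (\<lambda>n::nat. hurwitz_zeta s (real n / (2 * a) + 1 / 2)
                                 - hurwitz_zeta s (real n / (2 * a) + 1)) \<and>
            (\<lambda>k::nat. (-1) ^ k * hurwitz_zeta s (real (Suc k) * a)) sums
              (complex_of_real (2 * a) powr (- s) *
                 (\<Sum>n. hurwitz_zeta s (real n / (2 * a) + 1 / 2)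
                        - hurwitz_zeta s (real n / (2 * a) + 1))))"
  using part1[OF assms] part2[OF assms] by blast

end
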